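(* Let $\nu_A,\nu_B$ be positive integers and $\hat\lambda_1,\dots,\hat\lambda_n>0$. Consider maximizing $\sum_{i=1}^n\log f_{G}(\hat\lambda_i)$ over $G\in\mathcal G$. Then: (1) a maximizer $\hat G\in\mathcal G$ exists, and every maximizer has total mass $1$ and assigns zero mass to $\{0\}$; (2) every maximizer $\hat G$ satisfies, for all $G\in\mathcal G$, $\frac1n\sum_{i=1}^n f_G(\hat\lambda_i)/f_{\hat G}(\hat\lambda_i)\le1$; (3) every maximizer $\hat G$ is supported on $[\min_i\hat\lambda_i,\max_i\hat\lambda_i]$.
   Context: $\mathcal G$ is the class of positive Borel measures on $[0,\infty)$ with total mass at most $1$. For $l>0$, $\lambda>0$, $p(l\mid\lambda)=\frac{1}{\lambda}\frac{1}{B(\nu_A/2,\nu_B/2)}(\nu_A/\nu_B)^{\nu_A/2}(l/\lambda)^{\nu_A/2-1}(1+\nu_A l/(\nu_B\lambda))^{-(\nu_A+\nu_B)/2}$ (the density of $\lambda F_{\nu_A,\nu_B}$), and $p(l\mid0):=0$. For $G\in\mathcal G$, $f_G(l)=\int_{[0,\infty)}p(l\mid\lambda)\,dG(\lambda)$. *)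

theory Defs
  imports "HOL-Analysis.Analysis"
begin

text \<open>The class of sub-probability Borel measures on [0,\<infinity>), represented as Borel
measures on the real line with no mass on the negative reals.\<close>
definition Gcal :: "real measure set" where
  "Gcal = {G. sets G = sets borel \<and> emeasure G {..<0} = 0 \<and> emeasure G UNIV \<le> 1}"

text \<open>Density of lambda times an F(nuA,nuB) variable at l; p(l|lambda) = 0 for lambda \<le> 0
(only lambda = 0 matters, as measures in Gcal put no mass on negatives).\<close>
definition pF :: "nat \<Rightarrow> nat \<Rightarrow> real \<Rightarrow> real \<Rightarrow> real" where
  "pF nuA nuB l lam =
     (if lam > 0 then
        (1 / lam) * (1 / Beta (real nuA / 2) (real nuB / 2))
        * (real nuA / real nuB) powr (real nuA / 2)
        * (l / lam) powr (real nuA / 2 - 1)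
        * (1 + real nuA * l / (real nuB * lam)) powr (- (real nuA + real nuB) / 2)
      else 0)"

definition fG :: "nat \<Rightarrow> nat \<Rightarrow> real measure \<Rightarrow> real \<Rightarrow> real" where
  "fG nuA nuB G l = (\<integral>lam. pF nuA nuB l lam \<partial>G)"

definition loglik :: "nat \<Rightarrow> nat \<Rightarrow> nat \<Rightarrow> (nat \<Rightarrow> real) \<Rightarrow> real measure \<Rightarrow> ereal" where
  "loglik nuA nuB n lhat G =
     (\<Sum>i<n. if fG nuA nuB G (lhat i) > 0 then ereal (ln (fG nuA nuB G (lhat i))) else -\<infinity>)"

definition is_NPMLE :: "nat \<Rightarrow> nat \<Rightarrow> nat \<Rightarrow> (nat \<Rightarrow> real) \<Rightarrow> real measure \<Rightarrow> bool" where
  "is_NPMLE nuA nuB n lhat G \<longleftrightarrow>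
     G \<in> Gcal \<and> (\<forall>G'\<in>Gcal. loglik nuA nuB n lhat G' \<le> loglik nuA nuB n lhat G)"

end

theory Submission
  imports Defs "HOL-Probability.Probability"
begin


lemma Beta_pos_real: "x > 0 \<Longrightarrow> y > (0::real) \<Longrightarrow> Beta x y > 0"
  unfolding Beta_def by simp

lemma Beta_nonneg_nat: "Beta (real a / 2) (real b / 2) \<ge> 0"
proof -
  have g: "Gamma (real k / 2) \<ge> 0" for k :: nat
    by (cases "k = 0") (auto intro: less_imp_le)
  have "Gamma (real a / 2 + real b / 2) \<ge> 0" using g[of "a+b"] by (simp add: add_divide_distrib)
  then show ?thesis unfolding Beta_def using g[of a] g[of b] by simp
qed

lemma pF_nonneg: "pF a b l lam \<ge> 0"
  unfolding pF_def using Beta_nonneg_nat[of a b]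
  by (auto intro!: mult_nonneg_nonneg)

lemma pF_pos:
  assumes "a > 0" "b > 0" "l > 0" "lam > 0"
  shows "pF a b l lam > 0"
proof -
  have B: "Beta (real a / 2) (real b / 2) > 0" using assms by (intro Beta_pos_real) auto
  have c: "1 + real a * l / (real b * lam) > 0" using assms by (simp add: add_pos_nonneg)
  have "(real a / real b) powr (real a / 2) > 0" "(l / lam) powr (real a / 2 - 1) > 0"
    using assms by auto
  moreover have "(1 + real a * l / (real b * lam)) powr (- (real a + real b) / 2) > 0"
    using c by simp
  ultimately show ?thesis using assms B unfolding pF_def by simp
qed

definition phi :: "nat \<Rightarrow> nat \<Rightarrow> real \<Rightarrow> real \<Rightarrow> real" where
  "phi a b l lam = real b / 2 * ln lam - (real a + real b) / 2 * ln (lam + real a / real b * l)"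

lemma ln_pF:
  assumes "a > 0" "b > 0" "l > 0" "lam > 0"
  shows "ln (pF a b l lam) = ln (1 / Beta (real a / 2) (real b / 2)) + real a / 2 * ln (real a / real b)
     + (real a / 2 - 1) * ln l + phi a b l lam"
proof -
  have B: "Beta (real a / 2) (real b / 2) > 0" using assms by (intro Beta_pos_real) auto
  have e1: "1 + real a * l / (real b * lam) = (lam + real a / real b * l) / lam"
    using assms by (simp add: field_simps)
  have p: "lam + real a / real b * l > 0" using assms by (simp add: add_pos_nonneg)
  define X1 where "X1 = 1 / lam"
  define X2 where "X2 = 1 / Beta (real a / 2) (real b / 2)"
  define X3 where "X3 = (real a / real b) powr (real a / 2)"
  define X4 where "X4 = (l / lam) powr (real a / 2 - 1)"
  define X5 where "X5 = (1 + real a * l / (real b * lam)) powr (- (real a + real b) / 2)"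
  have c: "1 + real a * l / (real b * lam) > 0" using assms by (simp add: add_pos_nonneg)
  have pos: "X1 > 0" "X2 > 0" "X3 > 0" "X4 > 0" "X5 > 0"
    unfolding X1_def X2_def X3_def X4_def X5_def using assms B c by auto
  have "pF a b l lam = X1 * X2 * X3 * X4 * X5"
    unfolding pF_def X1_def X2_def X3_def X4_def X5_def using assms by simp
  then have "ln (pF a b l lam) = ln X1 + ln X2 + ln X3 + ln X4 + ln X5"
    using pos by (simp add: ln_mult)
  also have "\<dots> = ln (1/lam) + ln (1 / Beta (real a / 2) (real b / 2))
        + ln ((real a / real b) powr (real a / 2)) + ln ((l / lam) powr (real a / 2 - 1))
        + ln ((1 + real a * l / (real b * lam)) powr (- (real a + real b) / 2))"
    unfolding X1_def X2_def X3_def X4_def X5_def ..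
  also have "\<dots> = - ln lam + ln (1 / Beta (real a / 2) (real b / 2))
        + real a / 2 * ln (real a / real b) + (real a / 2 - 1) * (ln l - ln lam)
        + (- (real a + real b) / 2) * (ln (lam + real a / real b * l) - ln lam)"
    using assms p by (simp add: ln_powr ln_div e1 ln_inverse del: divide_const_simps)
  also have "\<dots> = ln (1 / Beta (real a / 2) (real b / 2)) + real a / 2 * ln (real a / real b)
     + (real a / 2 - 1) * ln l + phi a b l lam"
    unfolding phi_def by (simp add: algebra_simps add_divide_distrib diff_divide_distrib)
  finally show ?thesis .
qed

lemma phi_deriv0:
  assumes "lam > 0" "lam + c * l > (0::real)"
  shows "((\<lambda>lam. B / 2 * ln lam - A / 2 * ln (lam + c * l)) has_real_derivative (B / 2 * (1 / lam) - A / 2 * (1 / (lam + c * l)))) (at lam)"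
proof -
  have d1: "(ln has_real_derivative 1/lam) (at lam)" by (rule DERIV_ln_divide) fact
  have d0: "((\<lambda>x. x + c * l) has_real_derivative 1) (at lam)"
    by (rule derivative_eq_intros refl)+ simp
  have d2: "((\<lambda>x. ln (x + c*l)) has_real_derivative (1/(lam + c*l)) * 1) (at lam)"
    by (rule DERIV_chain2[OF DERIV_ln_divide[OF assms(2)] d0])
  show ?thesis using DERIV_diff[OF DERIV_cmult[OF d1, of "B/2"] DERIV_cmult[OF d2, of "A/2"]] by simp
qed

lemma phi_deriv:
  assumes "a > 0" "b > 0" "l > 0" "lam > 0"
  shows "(phi a b l has_real_derivative (real a * (l - lam) / (2 * lam * (lam + real a / real b * l)))) (at lam)"
proof -
  have p: "lam + real a / real b * l > 0" using assms by (simp add: add_pos_nonneg)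
  have "(phi a b l has_real_derivative (real b / 2 * (1 / lam) - (real a + real b) / 2 * (1 / (lam + real a / real b * l)))) (at lam)"
    unfolding phi_def using phi_deriv0[of lam "real a / real b" l "real b" "real a + real b"] assms p by simp
  moreover have "real b / 2 * (1 / lam) - (real a + real b) / 2 * (1 / (lam + real a / real b * l))
     = real a * (l - lam) / (2 * lam * (lam + real a / real b * l))"
  proof -
    define d where "d = lam + real a / real b * l"
    have d0: "d > 0" using p d_def by simp
    have "real b / 2 * (1 / lam) - (real a + real b) / 2 * (1 / d)
        = (real b * d - (real a + real b) * lam) / (2 * lam * d)"
      using d0 assms by (simp add: diff_divide_distrib)
    also have "real b * d - (real a + real b) * lam = real a * (l - lam)"
      unfolding d_def using assms by (simp add: algebra_simps)
    finally show ?thesis unfolding d_def .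
  qed
  ultimately show ?thesis by simp
qed

lemma phi_cont:
  assumes "a > 0" "b > 0" "l > 0"
  shows "continuous_on {0<..} (phi a b l)"
proof -
  have nn: "x + real a * l / real b \<noteq> 0" if "x > 0" for x
  proof -
    have "real a * l / real b \<ge> 0" using assms by simp
    then show ?thesis using that by linarith
  qed
  show ?thesis unfolding phi_def using assms
    by (intro continuous_intros) (auto dest: nn)
qed

lemma phi_incr:
  assumes "a > 0" "b > 0" "l > 0" "0 < x" "x < y" "y \<le> l"
  shows "phi a b l x < phi a b l y"
proof (rule DERIV_pos_imp_increasing_open[OF \<open>x < y\<close>])
  fix z assume z: "x < z" "z < y"
  have p: "z + real a / real b * l > 0" using assms z by (simp add: add_pos_nonneg)
  show "\<exists>d. DERIV (phi a b l) z :> d \<and> d > 0"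
    using phi_deriv[of a b l z] assms z p
    by (intro exI[of _ "real a * (l - z) / (2 * z * (z + real a / real b * l))"] conjI)
       (auto intro!: divide_pos_pos)
next
  show "continuous_on {x..y} (phi a b l)"
    by (rule continuous_on_subset[OF phi_cont[OF assms(1-3)]]) (use assms in auto)
qed

lemma phi_decr:
  assumes "a > 0" "b > 0" "l > 0" "l \<le> x" "x < y"
  shows "phi a b l y < phi a b l x"
proof (rule DERIV_neg_imp_decreasing_open[OF \<open>x < y\<close>])
  fix z assume z: "x < z" "z < y"
  have p: "z + real a / real b * l > 0" using assms z by (simp add: add_pos_nonneg)
  have "real a * (l - z) < 0" using assms z by (simp add: mult_pos_neg)
  then show "\<exists>d. DERIV (phi a b l) z :> d \<and> d < 0"
    using phi_deriv[of a b l z] assms z p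
    by (intro exI[of _ "real a * (l - z) / (2 * z * (z + real a / real b * l))"] conjI)
       (auto intro!: divide_neg_pos)
next
  show "continuous_on {x..y} (phi a b l)"
    by (rule continuous_on_subset[OF phi_cont[OF assms(1-3)]]) (use assms in auto)
qed

lemma pF_incr:
  assumes "a > 0" "b > 0" "l > 0" "0 < x" "x < y" "y \<le> l"
  shows "pF a b l x < pF a b l y"
proof -
  have "ln (pF a b l x) < ln (pF a b l y)"
    using ln_pF[of a b l x] ln_pF[of a b l y] phi_incr[OF assms] assms by simp
  then show ?thesis using pF_pos[of a b l x] pF_pos[of a b l y] assms by simp
qed

lemma pF_decr:
  assumes "a > 0" "b > 0" "l > 0" "l \<le> x" "x < y"
  shows "pF a b l y < pF a b l x"
proof -
  have "ln (pF a b l y) < ln (pF a b l x)"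
    using ln_pF[of a b l x] ln_pF[of a b l y] phi_decr[OF assms] assms by simp
  then show ?thesis using pF_pos[of a b l x] pF_pos[of a b l y] assms by simp
qed

lemma pF_le_mode:
  assumes "a > 0" "b > 0" "l > 0"
  shows "pF a b l x \<le> pF a b l l"
proof -
  consider "x \<le> 0" | "0 < x" "x < l" | "x = l" | "l < x" by linarith
  then show ?thesis
  proof cases
    case 1 then show ?thesis using pF_nonneg[of a b l l] by (simp add: pF_def)
  next
    case 2 then show ?thesis using pF_incr[of a b l x l] assms by simp
  next
    case 4 then show ?thesis using pF_decr[of a b l l x] assms by simp
  qed simp
qed


lemma pF_cont:
  assumes "a > 0" "b > 0" "l > 0"
  shows "continuous_on {0<..} (pF a b l)"
proof -
  have 1: "\<forall>x\<in>{0<..}. (1 + real a * l / (real b * x)) > 0"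
    using assms by (auto intro!: add_pos_nonneg)
  have 2: "\<forall>x\<in>{0<..}. l / x > 0" using assms by auto
  have 3: "\<forall>x\<in>{0<..}. 1 + real a * l / (real b * x) \<noteq> 0" using 1 by force
  have 4: "\<forall>x\<in>{0<..}. l / x \<noteq> 0" "\<forall>x\<in>{0<..}. real b * x \<noteq> 0" "\<forall>x\<in>{0<..}. (x::real) \<noteq> 0"
    using assms by auto
  have "continuous_on {0<..} (\<lambda>lam. (1 / lam) * (1 / Beta (real a / 2) (real b / 2))
        * (real a / real b) powr (real a / 2)
        * (l / lam) powr (real a / 2 - 1)
        * (1 + real a * l / (real b * lam)) powr (- (real a + real b) / 2))"
    apply (intro continuous_intros continuous_on_powr)
    using 1 2 3 4 assms by blast+
  then show ?thesis by (rule continuous_on_cong[THEN iffD1, rotated 2]) (auto simp: pF_def)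
qed

lemma pF_measurable[measurable]: "pF a b l \<in> borel_measurable borel"
  unfolding pF_def by measurable

lemma Gcal_sets: "G \<in> Gcal \<Longrightarrow> sets G = sets borel"
  unfolding Gcal_def by auto

lemma Gcal_space: "G \<in> Gcal \<Longrightarrow> space G = UNIV"
  using sets_eq_imp_space_eq[OF Gcal_sets] by auto

lemma Gcal_finite: "G \<in> Gcal \<Longrightarrow> finite_measure G"
  unfolding Gcal_def
  by (intro finite_measureI) (auto simp: sets_eq_imp_space_eq[of G borel] top_unique
        dest: order.strict_trans1[OF _ ennreal_one_less_top])

lemma Gcal_measure_le1: "G \<in> Gcal \<Longrightarrow> measure G UNIV \<le> 1"
  unfolding Gcal_def measure_def by (auto simp: enn2real_leI)

lemma pF_meas_G[measurable]:
  assumes "G \<in> Gcal" shows "pF a b l \<in> borel_measurable G"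
proof -
  have "measurable G borel = measurable borel (borel::real measure)"
    by (rule measurable_cong_sets) (simp_all add: Gcal_sets assms)
  then show ?thesis by simp
qed

lemma Gcal_integrable:
  assumes "G \<in> Gcal" "a > 0" "b > 0" "l > 0"
  shows "integrable G (pF a b l)"
proof -
  interpret finite_measure G using Gcal_finite[OF assms(1)] .
  show ?thesis
    by (rule integrable_const_bound[where B = "pF a b l l"])
       (use assms pF_le_mode pF_nonneg in \<open>auto\<close>)
qed

lemma fG_nonneg: "fG a b G l \<ge> 0"
  unfolding fG_def by (intro integral_nonneg_AE) (auto simp: pF_nonneg)

lemma fG_le:
  assumes "G \<in> Gcal" "a > 0" "b > 0" "l > 0"
  shows "fG a b G l \<le> pF a b l l"
proof -
  interpret finite_measure G using Gcal_finite[OF assms(1)] .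
  have "fG a b G l \<le> (\<integral>x. pF a b l l \<partial>G)"
    unfolding fG_def
    by (intro integral_mono Gcal_integrable assms) (use assms pF_le_mode in auto)
  also have "\<dots> = measure G UNIV * pF a b l l" using Gcal_space[OF assms(1)] by simp
  also have "\<dots> \<le> 1 * pF a b l l"
    by (intro mult_right_mono Gcal_measure_le1 assms pF_nonneg)
  finally show ?thesis by simp
qed

lemma return_Gcal: "x \<ge> 0 \<Longrightarrow> return borel x \<in> Gcal"
  unfolding Gcal_def by auto

lemma fG_return: "fG a b (return borel x) l = pF a b l x"
  unfolding fG_def by (rule integral_return) auto

definition ll :: "real \<Rightarrow> ereal" where
  "ll v = (if v > 0 then ereal (ln v) else -\<infinity>)"

lemma loglik_ll: "loglik a b n L G = (\<Sum>i<n. ll (fG a b G (L i)))"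
  unfolding loglik_def ll_def ..

lemma ll_mono: "x \<le> y \<Longrightarrow> ll x \<le> ll y"
  unfolding ll_def by auto

lemma loglik_mono:
  "(\<And>i. i < n \<Longrightarrow> fG a b G (L i) \<le> fG a b H (L i)) \<Longrightarrow> loglik a b n L G \<le> loglik a b n L H"
  unfolding loglik_ll by (intro sum_mono ll_mono) auto

lemma loglik_pos:
  "(\<And>i. i < n \<Longrightarrow> fG a b G (L i) > 0) \<Longrightarrow> loglik a b n L G = ereal (\<Sum>i<n. ln (fG a b G (L i)))"
  unfolding loglik_ll sum_ereal[symmetric] by (intro sum.cong) (auto simp: ll_def)

lemma loglik_minf:
  assumes "i < n" "\<not> fG a b G (L i) > 0"
  shows "loglik a b n L G = -\<infinity>"
proof -
  have "loglik a b n L G = ll (fG a b G (L i)) + (\<Sum>j\<in>{..<n} - {i}. ll (fG a b G (L j)))"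
    unfolding loglik_ll using assms by (subst sum.remove[of _ i]) auto
  moreover have "(\<Sum>j\<in>{..<n} - {i}. ll (fG a b G (L j))) \<noteq> \<infinity>"
    by (subst sum_Pinfty) (auto simp: ll_def)
  ultimately show ?thesis using assms by (simp add: ll_def)
qed

lemma loglik_strict:
  assumes "n \<ge> 1" "\<And>i. i < n \<Longrightarrow> fG a b G (L i) > 0" "\<And>i. i < n \<Longrightarrow> fG a b G (L i) < fG a b H (L i)"
  shows "loglik a b n L G < loglik a b n L H"
proof -
  have H: "\<And>i. i < n \<Longrightarrow> fG a b H (L i) > 0" using assms by (meson less_trans)
  have "(\<Sum>i<n. ln (fG a b G (L i))) < (\<Sum>i<n. ln (fG a b H (L i)))"
    using assms H by (intro sum_strict_mono) (auto simp: lessThan_empty_iff)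
  then show ?thesis using loglik_pos[of n a b G L] loglik_pos[of n a b H L] assms H by simp
qed


locale npmle =
  fixes a b n :: nat and L :: "nat \<Rightarrow> real"
  assumes a: "a > 0" and b: "b > 0" and n: "n \<ge> 1" and L: "\<And>i. i < n \<Longrightarrow> L i > 0"
begin

definition lo where "lo = Min (L ` {..<n})"
definition hi where "hi = Max (L ` {..<n})"
definition clamp where "clamp x = max lo (min hi x)"

lemma ne: "L ` {..<n} \<noteq> {}"
proof -
  have "L 0 \<in> L ` {..<n}" using n by auto
  then show ?thesis by auto
qed

lemma lo_le: "i < n \<Longrightarrow> lo \<le> L i"
  unfolding lo_def by (rule Min_le) auto

lemma hi_ge: "i < n \<Longrightarrow> L i \<le> hi"
  unfolding hi_def by (rule Max_ge) auto

lemma lo_pos: "lo > 0"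
proof -
  have "lo \<in> L ` {..<n}" unfolding lo_def using ne by (intro Min_in) auto
  then show ?thesis using L by auto
qed

lemma lo_le_hi: "lo \<le> hi"
  using lo_le[of 0] hi_ge[of 0] n by simp

lemma clamp_in: "lo \<le> clamp x" "clamp x \<le> hi"
  unfolding clamp_def using lo_le_hi by auto

lemma clamp_pos: "clamp x > 0"
  using clamp_in(1)[of x] lo_pos by simp

lemma clamp_id: "x \<in> {lo..hi} \<Longrightarrow> clamp x = x"
  unfolding clamp_def by auto

lemma clamp_clamp: "clamp (clamp x) = clamp x"
  using clamp_in[of x] by (intro clamp_id) auto

lemma clamp_meas[measurable]: "clamp \<in> borel_measurable borel"
  unfolding clamp_def by measurable

lemma clamp_cont: "continuous_on UNIV clamp"
  unfolding clamp_def by (intro continuous_intros)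

lemma pF_clamp_gt:
  assumes i: "i < n" and x: "x \<notin> {lo..hi}"
  shows "pF a b (L i) x < pF a b (L i) (clamp x)"
proof -
  have Li: "L i > 0" "lo \<le> L i" "L i \<le> hi" using L lo_le hi_ge i by auto
  consider "x < lo" | "x > hi" using x by auto
  then show ?thesis
  proof cases
    case 1
    then have c: "clamp x = lo" unfolding clamp_def using lo_le_hi by auto
    show ?thesis
    proof (cases "x > 0")
      case True then show ?thesis using pF_incr[of a b "L i" x lo] a b Li 1 c by simp
    next
      case False then show ?thesis using pF_pos[of a b "L i" lo] a b Li lo_pos c by (simp add: pF_def)
    qed
  next
    case 2
    then have c: "clamp x = hi" unfolding clamp_def using lo_le_hi by auto
    show ?thesis using pF_decr[of a b "L i" hi x] a b Li 2 c by simp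
  qed
qed

lemma pF_clamp_ge:
  assumes i: "i < n"
  shows "pF a b (L i) x \<le> pF a b (L i) (clamp x)"
  using pF_clamp_gt[OF i, of x] clamp_id[of x] by (cases "x \<in> {lo..hi}") auto

definition DG :: "real measure \<Rightarrow> real measure" where
  "DG G = distr G borel clamp"

lemma clamp_meas_G[measurable]:
  assumes "G \<in> Gcal" shows "clamp \<in> measurable G borel"
proof -
  have "measurable G borel = measurable borel (borel::real measure)"
    by (rule measurable_cong_sets) (simp_all add: Gcal_sets assms)
  then show ?thesis using clamp_meas by simp
qed

lemma DG_emeasure: "G \<in> Gcal \<Longrightarrow> A \<in> sets borel \<Longrightarrow> emeasure (DG G) A = emeasure G (clamp -` A)"
  unfolding DG_def by (subst emeasure_distr) (auto simp: Gcal_space)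

lemma DG_Gcal: "G \<in> Gcal \<Longrightarrow> DG G \<in> Gcal"
proof -
  assume G: "G \<in> Gcal"
  have "\<not> clamp x < 0" for x using clamp_pos[of x] by linarith
  then have "clamp -` {..<0} = {}" by auto
  then show ?thesis using G DG_emeasure[OF G] unfolding Gcal_def by (auto simp: DG_def)
qed

lemma DG_UNIV: "G \<in> Gcal \<Longrightarrow> emeasure (DG G) UNIV = emeasure G UNIV"
  by (simp add: DG_emeasure)

lemma DG_outside: "G \<in> Gcal \<Longrightarrow> emeasure (DG G) (UNIV - {lo..hi}) = 0"
proof -
  assume G: "G \<in> Gcal"
  have "clamp -` (UNIV - {lo..hi}) = {}" using clamp_in by auto
  then show ?thesis using DG_emeasure[OF G] by simp
qed

lemma fG_DG: "G \<in> Gcal \<Longrightarrow> fG a b (DG G) l = (\<integral>x. pF a b l (clamp x) \<partial>G)"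
  unfolding fG_def DG_def by (subst integral_distr) auto

lemma fG_DG_clamp: "G \<in> Gcal \<Longrightarrow> (\<integral>x. pF a b l (clamp x) \<partial>DG G) = fG a b (DG G) l"
  unfolding fG_def DG_def by (subst (1 2) integral_distr) (auto simp: clamp_clamp)

end



definition SG :: "real measure \<Rightarrow> real measure" where
  "SG G = density G (\<lambda>_. ennreal (1 / measure G UNIV))"

lemma SG_Gcal:
  assumes G: "G \<in> Gcal" and c: "measure G UNIV > 0"
  shows "SG G \<in> Gcal" "emeasure (SG G) UNIV = 1"
proof -
  interpret finite_measure G using Gcal_finite[OF G] .
  have U: "emeasure (SG G) UNIV = 1"
  proof -
    have "emeasure (SG G) UNIV = ennreal (1 / measure G UNIV) * emeasure G UNIV"
      unfolding SG_def using G by (subst emeasure_density_const) (auto simp: Gcal_sets)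
    also have "emeasure G UNIV = ennreal (measure G UNIV)" by (simp add: emeasure_eq_measure)
    also have "ennreal (1 / measure G UNIV) * ennreal (measure G UNIV) = ennreal (1 / measure G UNIV * measure G UNIV)"
      using c by (intro ennreal_mult[symmetric]) auto
    also have "1 / measure G UNIV * measure G UNIV = 1" using c by simp
    finally show ?thesis by simp
  qed
  have N: "emeasure (SG G) {..<0} = 0"
  proof -
    have "emeasure (SG G) {..<0} = ennreal (1 / measure G UNIV) * emeasure G {..<0}"
      unfolding SG_def using G by (subst emeasure_density_const) (auto simp: Gcal_sets)
    then show ?thesis using G by (simp add: Gcal_def)
  qed
  have S: "sets (SG G) = sets borel" using G by (simp add: SG_def Gcal_sets)
  show "SG G \<in> Gcal" using U N S unfolding Gcal_def by auto
  show "emeasure (SG G) UNIV = 1" by fact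
qed

lemma fG_SG:
  assumes G: "G \<in> Gcal"
  shows "fG a b (SG G) l = fG a b G l / measure G UNIV"
proof -
  have "fG a b (SG G) l = (\<integral>x. (1 / measure G UNIV) *\<^sub>R pF a b l x \<partial>G)"
    unfolding fG_def SG_def using G by (intro integral_density) auto
  also have "\<dots> = fG a b G l / measure G UNIV" unfolding fG_def by simp
  finally show ?thesis .
qed

lemma fG_le':
  assumes "G \<in> Gcal" "a > 0" "b > 0" "l > 0"
  shows "fG a b G l \<le> measure G UNIV * pF a b l l"
proof -
  interpret finite_measure G using Gcal_finite[OF assms(1)] .
  have "fG a b G l \<le> (\<integral>x. pF a b l l \<partial>G)"
    unfolding fG_def
    by (intro integral_mono Gcal_integrable assms) (use assms pF_le_mode in auto)
  also have "\<dots> = measure G UNIV * pF a b l l" using Gcal_space[OF assms(1)] by simp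
  finally show ?thesis .
qed


lemma Gcal_subprob: "G \<in> Gcal \<Longrightarrow> G \<in> space (subprob_algebra borel)"
proof -
  assume G: "G \<in> Gcal"
  have "subprob_space G"
  proof (rule subprob_spaceI)
    show "emeasure G (space G) \<le> 1" using G by (simp add: Gcal_space Gcal_def)
    show "space G \<noteq> {}" using G by (simp add: Gcal_space)
  qed
  then show ?thesis using G by (simp add: space_subprob_algebra Gcal_sets)
qed

definition MX :: "real \<Rightarrow> real measure \<Rightarrow> real measure \<Rightarrow> real measure" where
  "MX t G H = measure_pmf (bernoulli_pmf t) \<bind> (\<lambda>x. if x then G else H)"

lemma MX_meas:
  assumes "G \<in> Gcal" "H \<in> Gcal"
  shows "(\<lambda>x. if x then G else H) \<in> measurable (measure_pmf (bernoulli_pmf t)) (subprob_algebra borel)"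
proof -
  have "(\<lambda>x. if x then G else H) \<in> UNIV \<rightarrow> space (subprob_algebra borel)"
    using Gcal_subprob[OF assms(1)] Gcal_subprob[OF assms(2)] by auto
  then show ?thesis by (simp only: measurable_pmf_measure1)
qed
lemma MX_emeasure:
  assumes G: "G \<in> Gcal" and H: "H \<in> Gcal" and t: "0 \<le> t" "t \<le> 1" and A: "A \<in> sets borel"
  shows "emeasure (MX t G H) A = emeasure G A * t + emeasure H A * (1 - t)"
proof -
  have "emeasure (MX t G H) A = (\<integral>\<^sup>+x. emeasure (if x then G else H) A \<partial>measure_pmf (bernoulli_pmf t))"
    unfolding MX_def by (rule emeasure_bind[OF _ MX_meas[OF G H] A]) simp
  also have "\<dots> = emeasure G A * t + emeasure H A * (1 - t)"
    using t by (subst nn_integral_bernoulli_pmf) auto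
  finally show ?thesis .
qed

lemma MX_sets:
  assumes G: "G \<in> Gcal" and H: "H \<in> Gcal"
  shows "sets (MX t G H) = sets borel"
  unfolding MX_def by (rule sets_bind) (auto simp: Gcal_sets G H)

lemma MX_Gcal:
  assumes G: "G \<in> Gcal" and H: "H \<in> Gcal" and t: "0 \<le> t" "t \<le> 1"
  shows "MX t G H \<in> Gcal"
proof -
  have g: "emeasure G UNIV \<le> 1" "emeasure H UNIV \<le> 1" using G H by (auto simp: Gcal_def)
  have "emeasure G UNIV * t + emeasure H UNIV * (1 - t) \<le> 1 * ennreal t + 1 * ennreal (1 - t)"
    by (intro add_mono mult_right_mono g) auto
  also have "\<dots> = ennreal (t + (1 - t))" using t by (simp only: mult_1 ennreal_plus[symmetric])
  also have "\<dots> = 1" by simp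
  finally have U: "emeasure (MX t G H) UNIV \<le> 1" using MX_emeasure[OF G H t, of UNIV] by simp
  have N: "emeasure (MX t G H) {..<0} = 0" using MX_emeasure[OF G H t, of "{..<0}"] G H
    by (simp add: Gcal_def)
  show ?thesis using U N MX_sets[OF G H] unfolding Gcal_def by auto
qed
lemma fG_MX:
  assumes G: "G \<in> Gcal" and H: "H \<in> Gcal" and t: "0 \<le> t" "t \<le> 1"
    and ab: "a > 0" "b > 0" and l: "l > 0"
  shows "fG a b (MX t G H) l = t * fG a b G l + (1 - t) * fG a b H l"
proof -
  have M: "MX t G H \<in> Gcal" by (rule MX_Gcal[OF G H t])
  have nn: "\<And>M. M \<in> Gcal \<Longrightarrow> (\<integral>\<^sup>+x. ennreal (pF a b l x) \<partial>M) = ennreal (fG a b M l)"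
    unfolding fG_def by (intro nn_integral_eq_integral Gcal_integrable) (auto simp: ab l pF_nonneg)
  have "ennreal (fG a b (MX t G H) l) = (\<integral>\<^sup>+x. ennreal (pF a b l x) \<partial>MX t G H)"
    using nn[OF M] ..
  also have "\<dots> = (\<integral>\<^sup>+x. \<integral>\<^sup>+y. ennreal (pF a b l y) \<partial>(if x then G else H) \<partial>measure_pmf (bernoulli_pmf t))"
    unfolding MX_def by (rule nn_integral_bind[OF _ MX_meas[OF G H]]) auto
  also have "\<dots> = ennreal (fG a b G l) * t + ennreal (fG a b H l) * (1 - t)"
    using t by (simp add: nn[OF G] nn[OF H])
  also have "\<dots> = ennreal (t * fG a b G l + (1 - t) * fG a b H l)"
  proof -
    have x: "fG a b G l \<ge> 0" "fG a b H l \<ge> 0" by (rule fG_nonneg)+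
    have "ennreal (t * fG a b G l + (1 - t) * fG a b H l) = ennreal (t * fG a b G l) + ennreal ((1 - t) * fG a b H l)"
      using t x by (intro ennreal_plus) auto
    also have "ennreal (t * fG a b G l) = ennreal t * ennreal (fG a b G l)"
      using t x by (intro ennreal_mult) auto
    also have "ennreal ((1 - t) * fG a b H l) = ennreal (1 - t) * ennreal (fG a b H l)"
      using t x by (intro ennreal_mult) auto
    also have "ennreal t * ennreal (fG a b G l) + ennreal (1 - t) * ennreal (fG a b H l)
       = ennreal (fG a b G l) * ennreal t + ennreal (fG a b H l) * ennreal (1 - t)"
      by (simp only: mult.commute)
    finally show ?thesis by (rule sym)
  qed
  finally show ?thesis
    using t fG_nonneg[of a b G l] fG_nonneg[of a b H l] fG_nonneg[of a b "MX t G H" l]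
    by (subst (asm) ennreal_inj) auto
qed


lemma kkt_real:
  fixes A B :: "nat \<Rightarrow> real"
  assumes A: "\<And>i. i < n \<Longrightarrow> A i > 0" and B: "\<And>i. i < n \<Longrightarrow> B i \<ge> 0"
    and opt: "\<And>t. 0 < t \<Longrightarrow> t < 1 \<Longrightarrow> (\<Sum>i<n. ln (t * B i + (1 - t) * A i)) \<le> (\<Sum>i<n. ln (A i))"
  shows "(\<Sum>i<n. B i / A i) \<le> real n"
proof -
  define r where "r i = B i / A i" for i
  define F where "F t = (\<Sum>i<n. (r i - 1) / (1 + t * (r i - 1)))" for t
  have r0: "r i \<ge> 0" if i: "i < n" for i using A[OF i] B[OF i] by (simp add: r_def)
  have Fle: "F t \<le> 0" if t: "0 < t" "t < 1" for t
  proof -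
    have pos: "1 + t * (r i - 1) > 0" if i: "i < n" for i
    proof -
      have "1 + t * (r i - 1) = (1 - t) + t * r i" by (simp add: algebra_simps)
      moreover have "t * r i \<ge> 0" using r0[OF i] t by simp
      ultimately show ?thesis using t by linarith
    qed
    have eq: "t * B i + (1 - t) * A i = A i * (1 + t * (r i - 1))" if i: "i < n" for i
      using A[OF i] by (simp add: r_def field_simps)
    have lnb: "ln (1 + t * (r i - 1)) \<ge> t * ((r i - 1) / (1 + t * (r i - 1)))" if i: "i < n" for i
    proof -
      have "ln (1 / (1 + t * (r i - 1))) \<le> 1 / (1 + t * (r i - 1)) - 1"
        using pos[OF i] by (intro ln_le_minus_one) simp
      moreover have "1 / (1 + t * (r i - 1)) - 1 = - (t * ((r i - 1) / (1 + t * (r i - 1))))"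
        using pos[OF i] by (simp add: field_simps)
      ultimately show ?thesis using pos[OF i] by (simp add: ln_div)
    qed
    have "t * F t = (\<Sum>i<n. t * ((r i - 1) / (1 + t * (r i - 1))))"
      unfolding F_def by (simp add: sum_distrib_left)
    also have "\<dots> \<le> (\<Sum>i<n. ln (1 + t * (r i - 1)))"
      by (intro sum_mono lnb) auto
    also have "\<dots> = (\<Sum>i<n. ln (t * B i + (1 - t) * A i)) - (\<Sum>i<n. ln (A i))"
    proof -
      have lneq: "ln (t * B i + (1 - t) * A i) - ln (A i) = ln (1 + t * (r i - 1))" if i: "i < n" for i
        using A[OF i] pos[OF i] by (simp add: eq[OF i] ln_mult)
      show ?thesis unfolding sum_subtractf[symmetric] by (intro sum.cong refl) (simp add: lneq)
    qed
    also have "\<dots> \<le> 0" using opt[OF t] by simp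
    finally have "t * F t \<le> 0" .
    then show ?thesis using t by (simp add: mult_le_0_iff)
  qed
  have lim: "(F \<longlongrightarrow> F 0) (at_right 0)"
    unfolding F_def by (intro tendsto_intros) auto
  have "F 0 \<le> 0"
  proof (rule tendsto_upperbound[OF lim])
    show "\<forall>\<^sub>F t in at_right 0. F t \<le> 0"
      by (rule eventually_at_rightI[of 0 1]) (auto intro: Fle)
  qed simp
  then have "(\<Sum>i<n. r i - 1) \<le> 0" by (simp add: F_def)
  then show ?thesis by (simp add: sum_subtractf r_def)
qed



context npmle
begin

lemma return_L0: "return borel (L 0) \<in> Gcal"
  using L n by (intro return_Gcal) (auto intro: less_imp_le)

lemma loglik_return: "loglik a b n L (return borel (L 0)) \<noteq> -\<infinity>"
proof -
  have "fG a b (return borel (L 0)) (L i) > 0" if "i < n" for i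
    using L[OF that] L[of 0] n a b by (simp add: fG_return pF_pos)
  then show ?thesis using loglik_pos[of n a b "return borel (L 0)" L] by simp
qed

lemma NP_pos:
  assumes NP: "is_NPMLE a b n L G" and i: "i < n"
  shows "fG a b G (L i) > 0"
proof (rule ccontr)
  assume "\<not> fG a b G (L i) > 0"
  then have "loglik a b n L G = -\<infinity>" by (rule loglik_minf[OF i])
  moreover have "loglik a b n L (return borel (L 0)) \<le> loglik a b n L G"
    using NP return_L0 unfolding is_NPMLE_def by blast
  ultimately show False using loglik_return by simp
qed

lemma NP_Gcal: "is_NPMLE a b n L G \<Longrightarrow> G \<in> Gcal"
  unfolding is_NPMLE_def by blast

lemma NP_max: "is_NPMLE a b n L G \<Longrightarrow> H \<in> Gcal \<Longrightarrow> loglik a b n L H \<le> loglik a b n L G"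
  unfolding is_NPMLE_def by blast

lemma NP_outside:
  assumes NP: "is_NPMLE a b n L G"
  shows "emeasure G (UNIV - {lo..hi}) = 0"
proof (rule ccontr)
  assume pos: "emeasure G (UNIV - {lo..hi}) \<noteq> 0"
  have G: "G \<in> Gcal" using NP_Gcal[OF NP] .
  interpret finite_measure G using Gcal_finite[OF G] .
  have H: "DG G \<in> Gcal" using DG_Gcal[OF G] .
  have gt: "fG a b G (L i) < fG a b (DG G) (L i)" if i: "i < n" for i
  proof -
    define h where "h x = pF a b (L i) (clamp x) - pF a b (L i) x" for x
    have int1: "integrable G (\<lambda>x. pF a b (L i) (clamp x))"
      using Gcal_integrable[OF H a b L[OF i]] unfolding DG_def
      by (subst (asm) integrable_distr_eq) (auto simp: G)
    have int2: "integrable G (pF a b (L i))" using Gcal_integrable[OF G a b L[OF i]] .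
    have inth: "integrable G h" unfolding h_def using int1 int2 by auto
    have hnn: "h x \<ge> 0" for x using pF_clamp_ge[OF i, of x] by (simp add: h_def)
    have eq: "fG a b (DG G) (L i) - fG a b G (L i) = integral\<^sup>L G h"
    proof -
      have e1: "fG a b (DG G) (L i) = (\<integral>x. pF a b (L i) (clamp x) \<partial>G)" by (rule fG_DG[OF G])
      have e2: "fG a b G (L i) = integral\<^sup>L G (pF a b (L i))" by (simp add: fG_def)
      show ?thesis unfolding e1 e2 h_def using int1 int2 by simp
    qed
    have "integral\<^sup>L G h \<noteq> 0"
    proof
      assume "integral\<^sup>L G h = 0"
      then have "AE x in G. h x = 0" using integral_nonneg_eq_0_iff_AE[OF inth] hnn by simp
      then have "AE x in G. x \<in> {lo..hi}"
      proof (rule AE_mp, intro AE_I2 impI)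
        fix x assume "h x = 0"
        then show "x \<in> {lo..hi}" using pF_clamp_gt[OF i, of x] by (auto simp: h_def)
      qed
      then have "emeasure G (UNIV - {lo..hi}) = 0"
        by (subst (asm) AE_iff_measurable[where N="UNIV - {lo..hi}"]) (auto simp: Gcal_space[OF G] Gcal_sets[OF G])
      then show False using pos by simp
    qed
    moreover have "integral\<^sup>L G h \<ge> 0" using hnn by (intro integral_nonneg_AE) auto
    ultimately show ?thesis using eq by linarith
  qed
  have "loglik a b n L G < loglik a b n L (DG G)"
    by (rule loglik_strict[OF n]) (use NP_pos[OF NP] gt in auto)
  then show False using NP_max[OF NP H] by simp
qed

lemma NP_mass:
  assumes NP: "is_NPMLE a b n L G"
  shows "emeasure G UNIV = 1"
proof (rule ccontr)
  assume ne1: "emeasure G UNIV \<noteq> 1"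
  have G: "G \<in> Gcal" using NP_Gcal[OF NP] .
  interpret finite_measure G using Gcal_finite[OF G] .
  define c where "c = measure G UNIV"
  have e: "emeasure G UNIV = ennreal c" unfolding c_def by (simp add: emeasure_eq_measure)
  have c1: "c \<le> 1" unfolding c_def using Gcal_measure_le1[OF G] .
  have c1': "c \<noteq> 1" using ne1 e by auto
  have "fG a b G (L 0) \<le> c * pF a b (L 0) (L 0)" unfolding c_def
    using n by (intro fG_le' G a b L) auto
  moreover have "fG a b G (L 0) > 0" using NP_pos[OF NP, of 0] n by simp
  ultimately have c0: "c > 0" using measure_nonneg[of G UNIV] unfolding c_def
    by (metis less_eq_real_def mult_eq_0_iff order.strict_trans1 zero_less_mult_iff pF_nonneg)
  have S: "SG G \<in> Gcal" using SG_Gcal[OF G] c0 unfolding c_def by auto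
  have gt: "fG a b G (L i) < fG a b (SG G) (L i)" if i: "i < n" for i
  proof -
    have p: "fG a b G (L i) > 0" using NP_pos[OF NP i] .
    have "fG a b G (L i) = fG a b G (L i) / 1" by simp
    also have "\<dots> < fG a b G (L i) / c" using c0 c1 c1' p by (intro divide_strict_left_mono) auto
    finally show ?thesis using fG_SG[OF G] unfolding c_def by simp
  qed
  have "loglik a b n L G < loglik a b n L (SG G)"
    by (rule loglik_strict[OF n]) (use NP_pos[OF NP] gt in auto)
  then show False using NP_max[OF NP S] by simp
qed

lemma NP_zero:
  assumes NP: "is_NPMLE a b n L G"
  shows "emeasure G {0} = 0"
proof -
  have G: "G \<in> Gcal" using NP_Gcal[OF NP] .
  have "{0} \<subseteq> UNIV - {lo..hi}" using lo_pos by auto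
  then have "emeasure G {0} \<le> emeasure G (UNIV - {lo..hi})"
    by (intro emeasure_mono) (auto simp: Gcal_sets[OF G])
  then show ?thesis using NP_outside[OF NP] by simp
qed

lemma NP_kkt:
  assumes NP: "is_NPMLE a b n L Gh" and G: "G \<in> Gcal"
  shows "(1 / real n) * (\<Sum>i<n. fG a b G (L i) / fG a b Gh (L i)) \<le> 1"
proof -
  have Gh: "Gh \<in> Gcal" using NP_Gcal[OF NP] .
  have "(\<Sum>i<n. fG a b G (L i) / fG a b Gh (L i)) \<le> real n"
  proof (rule kkt_real)
    show "\<And>i. i < n \<Longrightarrow> fG a b Gh (L i) > 0" using NP_pos[OF NP] .
    show "\<And>i. i < n \<Longrightarrow> fG a b G (L i) \<ge> 0" by (rule fG_nonneg)
  next
    fix t :: real assume t: "0 < t" "t < 1"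
    have M: "MX t G Gh \<in> Gcal" using MX_Gcal[OF G Gh] t by auto
    have f: "fG a b (MX t G Gh) (L i) = t * fG a b G (L i) + (1 - t) * fG a b Gh (L i)" if i: "i < n" for i
      using fG_MX[OF G Gh _ _ a b L[OF i]] t by auto
    have fp: "fG a b (MX t G Gh) (L i) > 0" if i: "i < n" for i
    proof -
      have "t * fG a b G (L i) \<ge> 0" using t fG_nonneg[of a b G "L i"] by simp
      moreover have "(1 - t) * fG a b Gh (L i) > 0" using t NP_pos[OF NP i] by simp
      ultimately show ?thesis using f[OF i] by linarith
    qed
    have "loglik a b n L (MX t G Gh) \<le> loglik a b n L Gh" using NP_max[OF NP M] .
    then have "(\<Sum>i<n. ln (fG a b (MX t G Gh) (L i))) \<le> (\<Sum>i<n. ln (fG a b Gh (L i)))"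
      using loglik_pos[of n a b "MX t G Gh" L] loglik_pos[of n a b Gh L] fp NP_pos[OF NP] by simp
    then show "(\<Sum>i<n. ln (t * fG a b G (L i) + (1 - t) * fG a b Gh (L i))) \<le> (\<Sum>i<n. ln (fG a b Gh (L i)))"
      using f by simp
  qed
  then show ?thesis using n by (simp add: field_simps)
qed

end


context npmle
begin

definition U where "U = (\<Sum>i<n. ln (pF a b (L i) (L i)))"

lemma ll_le: "x \<le> B \<Longrightarrow> B > 0 \<Longrightarrow> ll x \<le> ereal (ln B)"
  unfolding ll_def by auto

lemma loglik_upper: "G \<in> Gcal \<Longrightarrow> loglik a b n L G \<le> ereal U"
  unfolding loglik_ll U_def sum_ereal[symmetric]
  by (intro sum_mono ll_le fG_le) (auto simp: a b L pF_pos)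

definition HH where "HH G = DG (SG G)"

lemma HH_Gcal: "G \<in> Gcal \<Longrightarrow> measure G UNIV > 0 \<Longrightarrow> HH G \<in> Gcal"
  unfolding HH_def by (intro DG_Gcal SG_Gcal)

lemma HH_UNIV: "G \<in> Gcal \<Longrightarrow> measure G UNIV > 0 \<Longrightarrow> emeasure (HH G) UNIV = 1"
  unfolding HH_def using SG_Gcal by (simp add: DG_UNIV)

lemma HH_real_distribution:
  assumes "G \<in> Gcal" "measure G UNIV > 0"
  shows "real_distribution (HH G)"
proof -
  have H: "HH G \<in> Gcal" using HH_Gcal[OF assms] .
  have "prob_space (HH G)"
    by (rule prob_spaceI) (use HH_UNIV[OF assms] Gcal_space[OF H] in simp)
  then show ?thesis unfolding real_distribution_def real_distribution_axioms_def
    using Gcal_sets[OF H] by simp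
qed

lemma HH_ge:
  assumes G: "G \<in> Gcal" and c: "measure G UNIV > 0" and i: "i < n"
  shows "fG a b G (L i) \<le> fG a b (HH G) (L i)"
proof -
  have S: "SG G \<in> Gcal" using SG_Gcal[OF G c] by simp
  have H: "DG (SG G) \<in> Gcal" using DG_Gcal[OF S] .
  have int1: "integrable (SG G) (\<lambda>x. pF a b (L i) (clamp x))"
    using Gcal_integrable[OF H a b L[OF i]] unfolding DG_def
    by (subst (asm) integrable_distr_eq) (auto simp: S)
  have int2: "integrable (SG G) (pF a b (L i))" using Gcal_integrable[OF S a b L[OF i]] .
  have "fG a b G (L i) \<le> fG a b G (L i) / measure G UNIV"
    using c Gcal_measure_le1[OF G] fG_nonneg[of a b G "L i"]
    by (simp add: le_divide_eq mult_left_le)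
  also have "\<dots> = fG a b (SG G) (L i)" using fG_SG[OF G] by simp
  also have "\<dots> \<le> (\<integral>x. pF a b (L i) (clamp x) \<partial>SG G)"
    unfolding fG_def by (intro integral_mono int1 int2 pF_clamp_ge i)
  also have "\<dots> = fG a b (HH G) (L i)" unfolding HH_def using fG_DG[OF S] by simp
  finally show ?thesis .
qed

lemma HH_in:
  assumes G: "G \<in> Gcal" and c: "measure G UNIV > 0"
  shows "measure (HH G) {lo - 1<..hi} = 1"
proof -
  have H: "HH G \<in> Gcal" using HH_Gcal[OF assms] .
  interpret finite_measure "HH G" using Gcal_finite[OF H] .
  have o: "emeasure (HH G) (UNIV - {lo..hi}) = 0" unfolding HH_def
    by (rule DG_outside) (use SG_Gcal[OF G c] in simp)
  have "emeasure (HH G) UNIV = emeasure (HH G) {lo..hi} + emeasure (HH G) (UNIV - {lo..hi})"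
    by (subst plus_emeasure) (auto simp: Gcal_sets[OF H])
  then have e1: "emeasure (HH G) {lo..hi} = 1" using o HH_UNIV[OF G c] by simp
  have "emeasure (HH G) {lo..hi} \<le> emeasure (HH G) {lo - 1<..hi}"
    by (intro emeasure_mono) (auto simp: Gcal_sets[OF H])
  moreover have "emeasure (HH G) {lo - 1<..hi} \<le> 1"
    using HH_UNIV[OF G c] emeasure_mono[of "{lo - 1<..hi}" UNIV "HH G"] by (simp add: Gcal_sets[OF H])
  ultimately have "emeasure (HH G) {lo - 1<..hi} = 1" using e1 by simp
  then show ?thesis by (simp add: measure_def)
qed

lemma HH_fG_clamp:
  assumes G: "G \<in> Gcal" and c: "measure G UNIV > 0"
  shows "(\<integral>x. pF a b l (clamp x) \<partial>HH G) = fG a b (HH G) l"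
  unfolding HH_def by (rule fG_DG_clamp) (use SG_Gcal[OF G c] in simp)

end


context npmle
begin

lemma NP_exists: "\<exists>G. is_NPMLE a b n L G"
proof -
  define s where "s = (SUP G\<in>Gcal. loglik a b n L G)"
  have s_ge: "loglik a b n L (return borel (L 0)) \<le> s"
    unfolding s_def by (rule SUP_upper[OF return_L0])
  have s_le: "s \<le> ereal U" unfolding s_def by (rule SUP_least) (rule loglik_upper)
  have s_upper: "G \<in> Gcal \<Longrightarrow> loglik a b n L G \<le> s" for G unfolding s_def by (rule SUP_upper)
  obtain S where sS: "s = ereal S"
    using s_ge s_le loglik_return by (cases s) auto
  have ex: "\<exists>G\<in>Gcal. ereal (S - 1 / real (Suc k)) < loglik a b n L G" for k
  proof -
    have "ereal (S - 1 / real (Suc k)) < s" using sS by simp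
    then show ?thesis unfolding s_def by (simp add: less_SUP_iff)
  qed
  then obtain Gs where Gs: "\<And>k. Gs k \<in> Gcal"
    and Gll: "\<And>k. ereal (S - 1 / real (Suc k)) < loglik a b n L (Gs k)"
    by metis
  have Gpos: "fG a b (Gs k) (L i) > 0" if i: "i < n" for k i
  proof (rule ccontr)
    assume "\<not> fG a b (Gs k) (L i) > 0"
    then have "loglik a b n L (Gs k) = -\<infinity>" by (rule loglik_minf[OF i])
    then show False using Gll[of k] by simp
  qed
  have cpos: "measure (Gs k) UNIV > 0" for k
  proof -
    have "0 < fG a b (Gs k) (L 0)" using Gpos n by simp
    also have "\<dots> \<le> measure (Gs k) UNIV * pF a b (L 0) (L 0)"
      using n by (intro fG_le' Gs a b L) auto
    finally show ?thesis using measure_nonneg[of "Gs k" UNIV]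
      by (simp add: zero_less_mult_iff)
  qed
  define Hs where "Hs k = HH (Gs k)" for k
  have H_Gcal: "Hs k \<in> Gcal" for k unfolding Hs_def by (rule HH_Gcal[OF Gs cpos])
  have H_rd: "real_distribution (Hs k)" for k unfolding Hs_def by (rule HH_real_distribution[OF Gs cpos])
  have H_ge: "i < n \<Longrightarrow> fG a b (Gs k) (L i) \<le> fG a b (Hs k) (L i)" for k i
    unfolding Hs_def by (rule HH_ge[OF Gs cpos])
  have H_in: "measure (Hs k) {lo - 1<..hi} = 1" for k unfolding Hs_def by (rule HH_in[OF Gs cpos])
  have H_cl: "(\<integral>x. pF a b l (clamp x) \<partial>Hs k) = fG a b (Hs k) l" for k l
    unfolding Hs_def by (rule HH_fG_clamp[OF Gs cpos])
  have Hpos: "i < n \<Longrightarrow> fG a b (Hs k) (L i) > 0" for k i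
    using Gpos H_ge by (meson less_le_trans)
  have Hsum: "S - 1 / real (Suc k) < (\<Sum>i<n. ln (fG a b (Hs k) (L i)))" for k
  proof -
    have "ereal (S - 1 / real (Suc k)) < loglik a b n L (Gs k)" by (rule Gll)
    also have "\<dots> \<le> loglik a b n L (Hs k)" by (rule loglik_mono) (rule H_ge)
    also have "\<dots> = ereal (\<Sum>i<n. ln (fG a b (Hs k) (L i)))" by (rule loglik_pos) (rule Hpos)
    finally show ?thesis by simp
  qed
  have tight: "tight Hs"
    unfolding tight_def
  proof (intro conjI allI impI)
    show "real_distribution (Hs k)" for k by (rule H_rd)
    fix e :: real assume e: "e > 0"
    show "\<exists>a b. a < b \<and> (\<forall>k. 1 - e < measure (Hs k) {a<..b})"
      using lo_le_hi e H_in by (intro exI[of _ "lo - 1"] exI[of _ hi]) auto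
  qed
  obtain r M where r: "strict_mono r" and M: "real_distribution M"
    and w: "weak_conv_m (Hs \<circ> id \<circ> r) M"
    using tight_imp_convergent_subsubsequence[OF tight strict_mono_id] by blast
  interpret M: real_distribution M by (rule M)
  have cM[measurable]: "clamp \<in> measurable M borel"
  proof -
    have "measurable M borel = measurable borel (borel::real measure)"
      by (rule measurable_cong_sets) simp_all
    then show ?thesis using clamp_meas by simp
  qed
  define Gst where "Gst = distr M borel clamp"
  have Gst: "Gst \<in> Gcal"
  proof -
    have "\<not> clamp x < 0" for x using clamp_pos[of x] by linarith
    then have e0: "clamp -` {..<0} \<inter> space M = {}" "clamp -` {..<0} = {}" by auto
    have "emeasure Gst {..<0} = 0" unfolding Gst_def
      by (subst emeasure_distr) (auto simp: e0)
    moreover have "emeasure Gst UNIV = 1"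
    proof -
      have spM: "space M = UNIV" using sets_eq_imp_space_eq[OF M.events_eq_borel] by simp
      show ?thesis unfolding Gst_def
        by (subst emeasure_distr) (use M.emeasure_space_1 spM in auto)
    qed
    ultimately show ?thesis unfolding Gcal_def Gst_def by auto
  qed
  have fGst: "fG a b Gst (L i) = (\<integral>x. pF a b (L i) (clamp x) \<partial>M)" for i
    unfolding fG_def Gst_def by (subst integral_distr) auto
  have conv: "(\<lambda>k. fG a b (Hs (r k)) (L i)) \<longlonglongrightarrow> fG a b Gst (L i)" if i: "i < n" for i
  proof -
    have cont: "continuous_on UNIV (\<lambda>x. pF a b (L i) (clamp x))"
      by (rule continuous_on_compose2[OF pF_cont[OF a b L[OF i]] clamp_cont]) (auto intro: clamp_pos)
    have "(\<lambda>k. \<integral>x. pF a b (L i) (clamp x) \<partial>(Hs \<circ> id \<circ> r) k) \<longlonglongrightarrow> (\<integral>x. pF a b (L i) (clamp x) \<partial>M)"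
    proof (rule weak_conv_imp_integral_bdd_continuous_conv[OF _ M w])
      show "real_distribution ((Hs \<circ> id \<circ> r) k)" for k using H_rd by simp
      show "isCont (\<lambda>x. pF a b (L i) (clamp x)) x" for x
        using cont by (simp add: continuous_on_eq_continuous_at)
      show "norm (pF a b (L i) (clamp x)) \<le> pF a b (L i) (L i)" for x
        using pF_nonneg[of a b "L i" "clamp x"] pF_le_mode[OF a b L[OF i]] by simp
    qed
    then show ?thesis by (simp add: H_cl fGst)
  qed
  define R where "R i = (\<Sum>j\<in>{..<n} - {i}. ln (pF a b (L j) (L j)))" for i
  have lowb: "exp (S - 1 - R i) \<le> fG a b (Hs k) (L i)" if i: "i < n" for i k
  proof -
    have "(\<Sum>j<n. ln (fG a b (Hs k) (L j))) = ln (fG a b (Hs k) (L i)) + (\<Sum>j\<in>{..<n} - {i}. ln (fG a b (Hs k) (L j)))"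
      using i by (subst sum.remove[of _ i]) auto
    also have "(\<Sum>j\<in>{..<n} - {i}. ln (fG a b (Hs k) (L j))) \<le> R i"
      unfolding R_def
    proof (intro sum_mono)
      fix j assume "j \<in> {..<n} - {i}"
      then have j: "j < n" by auto
      show "ln (fG a b (Hs k) (L j)) \<le> ln (pF a b (L j) (L j))"
        using Hpos[OF j, of k] fG_le[OF H_Gcal[of k] a b L[OF j]] by (intro ln_mono) auto
    qed
    finally have "(\<Sum>j<n. ln (fG a b (Hs k) (L j))) \<le> ln (fG a b (Hs k) (L i)) + R i" by simp
    moreover have "S - 1 \<le> S - 1 / real (Suc k)" by simp
    ultimately have "S - 1 - R i \<le> ln (fG a b (Hs k) (L i))" using Hsum[of k] by linarith
    then show ?thesis using Hpos[OF i] by (simp add: ln_ge_iff)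
  qed
  have vpos: "fG a b Gst (L i) > 0" if i: "i < n" for i
  proof -
    have "exp (S - 1 - R i) \<le> fG a b Gst (L i)"
      by (rule LIMSEQ_le_const[OF conv[OF i]]) (use lowb[OF i] in auto)
    then show ?thesis by (meson exp_gt_zero less_le_trans)
  qed
  have sconv: "(\<lambda>k. \<Sum>i<n. ln (fG a b (Hs (r k)) (L i))) \<longlonglongrightarrow> (\<Sum>i<n. ln (fG a b Gst (L i)))"
    by (intro tendsto_sum tendsto_ln conv) (auto dest: vpos)
  have inv: "(\<lambda>k. S - 1 / real (Suc k)) \<longlonglongrightarrow> S - 0"
    by (intro tendsto_diff tendsto_const) (use LIMSEQ_inverse_real_of_nat in \<open>simp add: inverse_eq_divide\<close>)
  have "S - 0 \<le> (\<Sum>i<n. ln (fG a b Gst (L i)))"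
  proof (rule LIMSEQ_le[OF inv sconv], intro exI allI impI)
    fix k :: nat
    have "k \<le> r k" using seq_suble[OF r] .
    then have "1 / real (Suc (r k)) \<le> 1 / real (Suc k)" by (simp add: frac_le)
    then show "S - 1 / real (Suc k) \<le> (\<Sum>i<n. ln (fG a b (Hs (r k)) (L i)))"
      using Hsum[of "r k"] by linarith
  qed
  then have "s \<le> loglik a b n L Gst"
    using sS loglik_pos[of n a b Gst L] vpos by simp
  then have "is_NPMLE a b n L Gst"
    unfolding is_NPMLE_def using Gst s_upper by (auto intro: order.trans)
  then show ?thesis by blast
qed

end

theorem lemmaS1:
  fixes nuA nuB n :: nat and lhat :: "nat \<Rightarrow> real"
  assumes "nuA > 0" and "nuB > 0" and "n \<ge> 1"
    and "\<And>i. i < n \<Longrightarrow> lhat i > 0"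
  shows "(\<exists>G. is_NPMLE nuA nuB n lhat G)
    \<and> (\<forall>G. is_NPMLE nuA nuB n lhat G \<longrightarrow> emeasure G UNIV = 1 \<and> emeasure G {0} = 0)
    \<and> (\<forall>Ghat. is_NPMLE nuA nuB n lhat Ghat \<longrightarrow> (\<forall>G\<in>Gcal.
          (1 / real n) * (\<Sum>i<n. fG nuA nuB G (lhat i) / fG nuA nuB Ghat (lhat i)) \<le> 1))
    \<and> (\<forall>Ghat. is_NPMLE nuA nuB n lhat Ghat \<longrightarrow>
          emeasure Ghat (UNIV - {Min (lhat ` {..<n}) .. Max (lhat ` {..<n})}) = 0)"
proof -
  interpret npmle nuA nuB n lhat using assms by unfold_locales auto
  have o: "emeasure Ghat (UNIV - {Min (lhat ` {..<n}) .. Max (lhat ` {..<n})}) = 0"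
    if "is_NPMLE nuA nuB n lhat Ghat" for Ghat
    using NP_outside[OF that] unfolding lo_def hi_def .
  show ?thesis using NP_exists NP_mass NP_zero NP_kkt o by blast
qed

end
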